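(* Let $(\mathbf{P},d_{\mathbf{P}})$ be a finite metric poset. (1) For nonnegative bounded complexes $E_\bullet,F_\bullet$ of projective $\mathbf{P}$-modules (with fixed decompositions of their terms into indecomposables), the following are equivalent: (a) $\mathrm{dist}'_{\mathrm{R}}(E_\bullet,F_\bullet)=0$; (b) there is a pre-matching $B$ of $(E_\bullet,F_\bullet)$ with $\mathrm{cost}(B)=0$; (c) $[E_\bullet]=[F_\bullet]$. (2) For $\mathbf{P}$-modules $M,N$ with minimal projective resolutions $P^M_\bullet,P^N_\bullet$, the following are equivalent: (a) $\mathrm{dist}'_{\mathrm{B}}(P^M_\bullet,P^N_\bullet)=0$; (b) there exist a projective resolution $E_\bullet$ of $M$ and $F_\bullet$ of $N$ with $|E_i|=|F_i|$ for all $i$ and a pre-matching $B$ of $(E_\bullet,F_\bullet)$ with $\mathrm{cost}(B)=0$; (c) $[P^M_\bullet]-[P^N_\bullet]$ lies in the subgroup of $K_{\mathrm{prj}}(\mathbf{P})^{(\mathbb{N})}$ generated by the elements $[\mathrm{Cone}(\mathrm{id}_{k[\mathbf{P}]_x})[i]]$, $x\in\mathbf{P}$, $i\in\mathbb{N}$; (d) $\hat{\alpha}([P^M_\bullet])=\hat{\alpha}([P^N_\bullet])$. In particular, if $\mathrm{dist}_{\mathrm{B}}(P^M_\bullet,P^N_\bullet)=0$, then $\hat{\alpha}([P^M_\bullet])=\hat{\alpha}([P^N_\bullet])$.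
   Context: Fix a field $k$; a $\mathbf{P}$-module is a functor from the finite poset $\mathbf{P}$ (as a category) to finite-dimensional $k$-vector spaces. For $x\in\mathbf{P}$, $k[\mathbf{P}]_x$ is the module with value $k$ at $y\ge x$, $0$ elsewhere, identity maps; these are the indecomposable projectives. $K_{\mathrm{prj}}(\mathbf{P})$ is the split Grothendieck group of projective $\mathbf{P}$-modules (free on $[k[\mathbf{P}]_x]$); for a nonnegative bounded complex $E_\bullet=(E_i)_{i\in\mathbb{N}}$ of projectives, $[E_\bullet]=([E_i])_{i\in\mathbb{N}}\in K_{\mathrm{prj}}(\mathbf{P})^{(\mathbb{N})}$ (finitely supported sequences); $\hat{\alpha}((A_i)_i)=\sum_i(-1)^iA_i$. $\mathrm{Cone}(\mathrm{id}_E)[a]$ is the complex with $E$ in degrees $a+1$ and $a$ joined by $\mathrm{id}_E$, zero elsewhere. Each term $E_i$ is a direct sum $\bigoplus_{x\in\mathrm{smd}(E_i)}k[\mathbf{P}]_x$ with a fixed decomposition ($\mathrm{smd}$ = indexed multiset of indices), $|E_i|$ its number of summands. For $y\le x$ let $\rho(x\ge y):k[\mathbf{P}]_x\to k[\mathbf{P}]_y$ be the canonical morphism (identity at each $z\ge x$), $\rho(x\ge y)=0$ otherwise; a morphism between decomposed projectives is uniquely $[a_{x,y}\rho(x\ge y)]$ with $a_{x,y}=0$ unless $x\ge y$, and $\mathrm{Mat}$ is $[a_{x,y}]$. A pre-matching of $(E_\bullet,F_\bullet)$ is a family of bijections $B_i:\mathrm{smd}(E_i)\to\mathrm{smd}(F_i)$,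 $i\ge0$; its cost is $\sup\{d_{\mathbf{P}}(x,B_i(x))\mid i,x\in\mathrm{smd}(E_i)\}$. A matching is a pre-matching such that the $(x',x)$-entry of $\mathrm{Mat}(\partial^E_i)$ equals the $(B_{i+1}(x'),B_i(x))$-entry of $\mathrm{Mat}(\partial^F_i)$ for all $i$, $x\in\mathrm{smd}(E_i)$, $x'\in\mathrm{smd}(E_{i+1})$. $\mathrm{dist}'_{\mathrm{R}}(E_\bullet,F_\bullet)$ (resp. $\mathrm{dist}_{\mathrm{R}}$) is the infimum of costs of pre-matchings (resp. matchings), $\infty$ if none. For $\mathbf{P}$-modules, with $\mathsf{Res}(P^M_\bullet,P^N_\bullet)$ the set of pairs $(E_\bullet,F_\bullet)$ of projective resolutions of $M$ and $N$ with $|E_i|=|F_i|$ for all $i$, $\mathrm{dist}'_{\mathrm{B}}(P^M_\bullet,P^N_\bullet)$ (resp. $\mathrm{dist}_{\mathrm{B}}$) is the infimum of $\mathrm{dist}'_{\mathrm{R}}$ (resp. $\mathrm{dist}_{\mathrm{R}}$) over $\mathsf{Res}(P^M_\bullet,P^N_\bullet)$, $\infty$ if empty. *)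

theory Defs
  imports "Jordan_Normal_Form.Matrix" "HOL-Library.Multiset"
    "HOL-Library.Extended_Nonnegative_Real"
begin

definition metric_on :: "('p \<Rightarrow> 'p \<Rightarrow> real) \<Rightarrow> bool" where
  "metric_on d \<longleftrightarrow> (\<forall>x y. d x y \<ge> 0) \<and> (\<forall>x y. d x y = 0 \<longleftrightarrow> x = y)
     \<and> (\<forall>x y. d x y = d y x) \<and> (\<forall>x y z. d x z \<le> d x y + d y z)"

text \<open>A P-module is given up to isomorphism by a dimension vector and structure matrices:
  the space at x is k^(mdim x), and for x \<le> y the map M(x \<le> y) is the matrix mact x y
  of size mdim y \<times> mdim x.\<close>

record ('p, 'k) pmod =
  mdim :: "'p \<Rightarrow> nat"
  mact :: "'p \<Rightarrow> 'p \<Rightarrow> 'k mat"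

definition is_pmod :: "('p::order, 'k::field) pmod \<Rightarrow> bool" where
  "is_pmod M \<longleftrightarrow>
     (\<forall>x y. x \<le> y \<longrightarrow> mact M x y \<in> carrier_mat (mdim M y) (mdim M x))
   \<and> (\<forall>x. mact M x x = 1\<^sub>m (mdim M x))
   \<and> (\<forall>x y z. x \<le> y \<and> y \<le> z \<longrightarrow> mact M x z = mact M y z * mact M x y)"

text \<open>E_i = direct sum of k[P]_x for x in the list smd E i (summands indexed by positions
  0..<length).  dmat E i j l is the entry a_{x',x} of Mat(\<partial>_i : E_{i+1} \<rightarrow> E_i) for the
  j-th summand x' of E_{i+1} and the l-th summand x of E_i.\<close>

record ('p, 'k) cplx =
  smd  :: "nat \<Rightarrow> 'p list"
  dmat :: "nat \<Rightarrow> nat \<Rightarrow> nat \<Rightarrow> 'k"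

definition nsmd :: "('p, 'k) cplx \<Rightarrow> nat \<Rightarrow> nat" where
  "nsmd E i = length (smd E i)"

text \<open>Value of E_i at z: vectors in k^|E_i| supported on summands x with x \<le> z.\<close>
definition Ept :: "('p::order, 'k::field) cplx \<Rightarrow> nat \<Rightarrow> 'p \<Rightarrow> 'k vec set" where
  "Ept E i z = {v \<in> carrier_vec (nsmd E i). \<forall>j < nsmd E i. \<not> (smd E i ! j \<le> z) \<longrightarrow> v $ j = 0}"

text \<open>The differential \<partial>_i at a point (the same matrix at each point, restricted).\<close>
definition dapp :: "('p, 'k::field) cplx \<Rightarrow> nat \<Rightarrow> 'k vec \<Rightarrow> 'k vec" where
  "dapp E i v = vec (nsmd E i) (\<lambda>l. \<Sum>j<nsmd E (Suc i). dmat E i j l * v $ j)"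

definition is_cplx :: "('p::order, 'k::field) cplx \<Rightarrow> bool" where
  "is_cplx E \<longleftrightarrow>
     (\<forall>i j l. j < nsmd E (Suc i) \<and> l < nsmd E i \<and> \<not> (smd E i ! l \<le> smd E (Suc i) ! j)
          \<longrightarrow> dmat E i j l = 0)
   \<and> (\<forall>i z. \<forall>v \<in> Ept E (Suc (Suc i)) z. dapp E i (dapp E (Suc i) v) = 0\<^sub>v (nsmd E i))
   \<and> (\<exists>n. \<forall>i \<ge> n. smd E i = [])"

text \<open>An augmentation E_0 \<rightarrow> M is given (Yoneda) by elements aug j \<in> M(x_j) for the
  summands x_j of E_0; at z it sends e_j (x_j \<le> z) to M(x_j \<le> z)(aug j).\<close>
definition eps_app :: "('p::order, 'k::field) pmod \<Rightarrow> ('p, 'k) cplx \<Rightarrow> (nat \<Rightarrow> 'k vec)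
    \<Rightarrow> 'p \<Rightarrow> 'k vec \<Rightarrow> 'k vec" where
  "eps_app M E aug z v = vec (mdim M z)
     (\<lambda>r. \<Sum>j | j < nsmd E 0 \<and> smd E 0 ! j \<le> z. v $ j * (mact M (smd E 0 ! j) z *\<^sub>v aug j) $ r)"

definition is_res_aug :: "('p::order, 'k::field) pmod \<Rightarrow> ('p, 'k) cplx \<Rightarrow> (nat \<Rightarrow> 'k vec) \<Rightarrow> bool" where
  "is_res_aug M E aug \<longleftrightarrow> is_cplx E
   \<and> (\<forall>j < nsmd E 0. aug j \<in> carrier_vec (mdim M (smd E 0 ! j)))
   \<and> (\<forall>z. eps_app M E aug z ` Ept E 0 z = carrier_vec (mdim M z))
   \<and> (\<forall>z. {v \<in> Ept E 0 z. eps_app M E aug z v = 0\<^sub>v (mdim M z)} = dapp E 0 ` Ept E 1 z)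
   \<and> (\<forall>i z. {v \<in> Ept E (Suc i) z. dapp E i v = 0\<^sub>v (nsmd E i)} = dapp E (Suc i) ` Ept E (Suc (Suc i)) z)"

definition is_proj_res :: "('p::order, 'k::field) pmod \<Rightarrow> ('p, 'k) cplx \<Rightarrow> bool" where
  "is_proj_res M E \<longleftrightarrow> (\<exists>aug. is_res_aug M E aug)"

text \<open>Radical of E_i at z: vectors with zero coefficient on all summands equal to z.\<close>
definition in_rad :: "('p::order, 'k::field) cplx \<Rightarrow> nat \<Rightarrow> 'p \<Rightarrow> 'k vec \<Rightarrow> bool" where
  "in_rad E i z v \<longleftrightarrow> (\<forall>j < nsmd E i. smd E i ! j = z \<longrightarrow> v $ j = 0)"

definition is_min_proj_res :: "('p::order, 'k::field) pmod \<Rightarrow> ('p, 'k) cplx \<Rightarrow> bool" where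
  "is_min_proj_res M E \<longleftrightarrow> (\<exists>aug. is_res_aug M E aug
     \<and> (\<forall>z. \<forall>v \<in> Ept E 0 z. eps_app M E aug z v = 0\<^sub>v (mdim M z) \<longrightarrow> in_rad E 0 z v)
     \<and> (\<forall>i z. \<forall>v \<in> Ept E (Suc i) z. dapp E i v = 0\<^sub>v (nsmd E i) \<longrightarrow> in_rad E (Suc i) z v))"

text \<open>K_prj(P)^(N) is represented by functions nat \<Rightarrow> 'p \<Rightarrow> int (free abelian on P in
  each degree), finitely supported in the degree.\<close>

definition cls :: "('p, 'k) cplx \<Rightarrow> nat \<Rightarrow> 'p \<Rightarrow> int" where
  "cls E = (\<lambda>i x. int (count (mset (smd E i)) x))"

definition alpha_hat :: "(nat \<Rightarrow> 'p \<Rightarrow> int) \<Rightarrow> 'p \<Rightarrow> int" where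
  "alpha_hat A = (\<lambda>x. \<Sum>i \<in> {i. A i \<noteq> (\<lambda>_. 0)}. (-1) ^ i * A i x)"

definition cone_cls :: "'p \<Rightarrow> nat \<Rightarrow> nat \<Rightarrow> 'p \<Rightarrow> int" where
  "cone_cls x a = (\<lambda>j y. if (j = a \<or> j = Suc a) \<and> y = x then 1 else 0)"

inductive_set cone_subgroup :: "(nat \<Rightarrow> 'p \<Rightarrow> int) set" where
  zero: "(\<lambda>_ _. 0) \<in> cone_subgroup"
| add: "A \<in> cone_subgroup \<Longrightarrow> (\<lambda>j y. A j y + cone_cls x a j y) \<in> cone_subgroup"
| sub: "A \<in> cone_subgroup \<Longrightarrow> (\<lambda>j y. A j y - cone_cls x a j y) \<in> cone_subgroup"

definition prematching :: "('p, 'k) cplx \<Rightarrow> ('p, 'k) cplx \<Rightarrow> (nat \<Rightarrow> nat \<Rightarrow> nat) \<Rightarrow> bool" where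
  "prematching E F B \<longleftrightarrow> (\<forall>i. bij_betw (B i) {..<nsmd E i} {..<nsmd F i})"

definition matching :: "('p, 'k) cplx \<Rightarrow> ('p, 'k) cplx \<Rightarrow> (nat \<Rightarrow> nat \<Rightarrow> nat) \<Rightarrow> bool" where
  "matching E F B \<longleftrightarrow> prematching E F B \<and>
     (\<forall>i j l. j < nsmd E (Suc i) \<and> l < nsmd E i \<longrightarrow>
        dmat E i j l = dmat F i (B (Suc i) j) (B i l))"

definition cost :: "('p \<Rightarrow> 'p \<Rightarrow> real) \<Rightarrow> ('p, 'k) cplx \<Rightarrow> ('p, 'k) cplx
    \<Rightarrow> (nat \<Rightarrow> nat \<Rightarrow> nat) \<Rightarrow> ennreal" where
  "cost d E F B = (SUP i. SUP j \<in> {..<nsmd E i}. ennreal (d (smd E i ! j) (smd F i ! B i j)))"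

definition distR' :: "('p \<Rightarrow> 'p \<Rightarrow> real) \<Rightarrow> ('p, 'k) cplx \<Rightarrow> ('p, 'k) cplx \<Rightarrow> ennreal" where
  "distR' d E F = (INF B \<in> {B. prematching E F B}. cost d E F B)"

definition distR :: "('p \<Rightarrow> 'p \<Rightarrow> real) \<Rightarrow> ('p, 'k) cplx \<Rightarrow> ('p, 'k) cplx \<Rightarrow> ennreal" where
  "distR d E F = (INF B \<in> {B. matching E F B}. cost d E F B)"

definition Res :: "('p::order, 'k::field) pmod \<Rightarrow> ('p, 'k) pmod \<Rightarrow> (('p, 'k) cplx \<times> ('p, 'k) cplx) set" where
  "Res M N = {(E, F). is_proj_res M E \<and> is_proj_res N F \<and> (\<forall>i. nsmd E i = nsmd F i)}"

text \<open>dist'_B(P^M, P^N) and dist_B(P^M, P^N) depend only on M and N.\<close>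
definition distB' :: "('p::order \<Rightarrow> 'p \<Rightarrow> real) \<Rightarrow> ('p, 'k::field) pmod \<Rightarrow> ('p, 'k) pmod \<Rightarrow> ennreal" where
  "distB' d M N = (INF EF \<in> Res M N. distR' d (fst EF) (snd EF))"

definition distB :: "('p::order \<Rightarrow> 'p \<Rightarrow> real) \<Rightarrow> ('p, 'k::field) pmod \<Rightarrow> ('p, 'k) pmod \<Rightarrow> ennreal" where
  "distB d M N = (INF EF \<in> Res M N. distR d (fst EF) (snd EF))"

end

theory Submission
  imports Defs "Jordan_Normal_Form.VS_Connect" "HOL-Combinatorics.Permutations"
begin


definition subsp :: "nat \<Rightarrow> 'k::field vec set \<Rightarrow> bool" where
 "subsp n S \<longleftrightarrow> S \<subseteq> carrier_vec n \<and> 0\<^sub>v n \<in> S \<and> (\<forall>u\<in>S. \<forall>v\<in>S. u + v \<in> S) \<and> (\<forall>c. \<forall>v\<in>S. c \<cdot>\<^sub>v v \<in> S)"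

definition vdim :: "nat \<Rightarrow> 'k::field vec set \<Rightarrow> nat" where
 "vdim n S = vectorspace.dim (class_ring :: 'k ring) ((module_vec TYPE('k) n)\<lparr>carrier := S\<rparr>)"

definition vfin :: "nat \<Rightarrow> 'k::field vec set \<Rightarrow> bool" where
 "vfin n S = vectorspace.fin_dim (class_ring :: 'k ring) ((module_vec TYPE('k) n)\<lparr>carrier := S\<rparr>)"

lemma subsp_submodule:
  assumes "subsp n (S :: 'k::field vec set)"
  shows "submodule (class_ring :: 'k ring) S (module_vec TYPE('k) n)"
  using assms vec_module[where 'a='k and n=n] unfolding subsp_def submodule_def
  by (auto simp: module_vec_simps class_ring_simps)

lemma subsp_vs:
  assumes "subsp n (S :: 'k::field vec set)"
  shows "vectorspace (class_ring :: 'k ring) ((module_vec TYPE('k) n)\<lparr>carrier := S\<rparr>)"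
proof -
  interpret vec_space "TYPE('k)" n .
  show ?thesis using subspace_is_vs[of S] subsp_submodule[OF assms] vec_vs
    unfolding subspace_def by auto
qed

lemma coord_dim:
  fixes Q :: "nat \<Rightarrow> bool" and n :: nat
  defines "S \<equiv> {v \<in> carrier_vec n. \<forall>j<n. \<not> Q j \<longrightarrow> v $ j = (0::'k::field)}"
  shows "vdim n S = card {j. j<n \<and> Q j} \<and> vfin n S \<and> subsp n S"
proof -
  interpret vec_space "TYPE('k)" n .
  let ?J = "{j. j<n \<and> Q j}"
  let ?U = "unit_vec n ` ?J :: 'k vec set"
  have sub: "subsp n S" by (auto simp: subsp_def S_def)
  have smod: "submodule class_ring S V" using subsp_submodule[OF sub] .
  have U_S: "?U \<subseteq> S" by (auto simp: S_def)
  have Uc: "?U \<subseteq> carrier_vec n" by auto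
  have finU: "finite ?U" by auto
  have li: "lin_indpt ?U"
  proof (rule subset_li_is_li)
    show "lin_indpt (set (unit_vecs n))" using unit_vecs_basis unfolding basis_def by auto
    show "?U \<subseteq> set (unit_vecs n)" unfolding unit_vecs_def by auto
  qed
  have span: "span ?U = S"
  proof
    show "span ?U \<subseteq> S" using span_is_subset[OF U_S smod] .
    show "S \<subseteq> span ?U"
    proof
      fix v assume v: "v \<in> S"
      define a where "a = (\<lambda>u::'k vec. v $ (THE i. u = unit_vec n i))"
      have aj: "a (unit_vec n j) = v $ j" if "j < n" for j
        unfolding a_def using that by (metis (mono_tags, lifting) the_equality unit_vec_eq)
      have "lincomb a ?U = v"
      proof (rule eq_vecI)
        show "dim_vec (lincomb a ?U) = dim_vec v" using lincomb_dim[OF finU Uc] v by (auto simp: S_def)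
        fix i assume "i < dim_vec v"
        hence i: "i < n" using v by (auto simp: S_def)
        have inj: "inj_on (unit_vec n :: nat \<Rightarrow> 'k vec) ?J" by (auto simp: inj_on_def)
        have "lincomb a ?U $ i = (\<Sum>x\<in>?U. a x * x $ i)" using lincomb_index[OF i Uc] .
        also have "\<dots> = (\<Sum>j\<in>?J. v $ j * (unit_vec n j :: 'k vec) $ i)"
          by (subst sum.reindex[OF inj]) (auto simp: aj intro!: sum.cong)
        also have "\<dots> = (\<Sum>j\<in>?J. if j = i then v $ i else 0)"
          using i by (intro sum.cong) auto
        also have "\<dots> = v $ i" using v i by (auto simp: S_def)
        finally show "lincomb a ?U $ i = v $ i" .
      qed
      thus "v \<in> span ?U" unfolding finite_span[OF finU Uc] by auto
    qed
  qed
  have vsS: "vectorspace class_ring (vs S)" using subsp_vs[OF sub] .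
  have sp2: "module.span class_ring (vs S) ?U = S" using span_li_not_depend(1)[OF U_S smod] span by simp
  have li2: "\<not> module.lin_dep class_ring (vs S) ?U" using span_li_not_depend(2)[OF U_S smod] li by simp
  have bas: "vectorspace.basis class_ring (vs S) ?U"
    using sp2 li2 U_S vectorspace.basis_def[OF vsS] by auto
  have "vectorspace.dim class_ring (vs S) = card ?U" using vectorspace.dim_basis[OF vsS finU bas] .
  also have "card ?U = card ?J" by (rule card_image) (auto simp: inj_on_def)
  finally have "vdim n S = card ?J" unfolding vdim_def .
  moreover have "vfin n S" unfolding vfin_def vectorspace.fin_dim_def[OF vsS]
    using finU U_S sp2 by (intro exI[of _ ?U]) auto
  ultimately show ?thesis using sub by auto
qed

lemma rank_nullity_vec:
  fixes T :: "'k::field vec \<Rightarrow> 'k vec" and S :: "'k vec set"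
  assumes sub: "subsp n S" and fin: "vfin n S"
  and Tc: "\<forall>v\<in>S. T v \<in> carrier_vec m"
  and Tadd: "\<forall>u\<in>S. \<forall>v\<in>S. T (u+v) = T u + T v"
  and Tsm: "\<forall>c. \<forall>v\<in>S. T (c \<cdot>\<^sub>v v) = c \<cdot>\<^sub>v T v"
  shows "vdim n S = vdim m (T ` S) + vdim n {v\<in>S. T v = 0\<^sub>v m}"
proof -
  have vsS: "vectorspace class_ring ((module_vec TYPE('k) n)\<lparr>carrier := S\<rparr>)" using subsp_vs[OF sub] .
  have vsW: "vectorspace (class_ring :: 'k ring) (module_vec TYPE('k) m)" using vec_vs .
  interpret L: linear_map "class_ring :: 'k ring" "(module_vec TYPE('k) n)\<lparr>carrier := S\<rparr>" "module_vec TYPE('k) m" T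
  proof (unfold linear_map_def, intro conjI vsS vsW)
    show "mod_hom class_ring ((module_vec TYPE('k) n)\<lparr>carrier := S\<rparr>) (module_vec TYPE('k) m) T"
      unfolding mod_hom_def mod_hom_axioms_def module_hom_def
      using vsS vsW Tc Tadd Tsm unfolding vectorspace_def
      by (auto simp: module_vec_simps class_ring_simps)
  qed
  have fd: "L.V.fin_dim" using fin unfolding vfin_def .
  have "vectorspace.dim class_ring (L.W.vs L.imT) + vectorspace.dim class_ring (L.V.vs L.kerT) = L.V.dim"
    using L.rank_nullity[OF fd] .
  moreover have "L.imT = T ` S" unfolding L.im_def by simp
  moreover have "L.kerT = {v\<in>S. T v = 0\<^sub>v m}" unfolding L.ker_def by (simp add: module_vec_simps)
  ultimately show ?thesis unfolding vdim_def by simp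
qed



lemma alt_telescope:
  fixes s k :: "nat \<Rightarrow> int"
  assumes "s 0 = w + k 0" "\<And>i. s (Suc i) = k i + k (Suc i)"
  shows "(\<Sum>i<Suc n. (-1)^i * s i) = w + (-1)^n * k n"
  by (induction n) (auto simp: assms algebra_simps)

lemma Ept_coord: "Ept E i z = {v \<in> carrier_vec (nsmd E i). \<forall>j<nsmd E i. \<not> (smd E i ! j \<le> z) \<longrightarrow> v $ j = 0}"
  unfolding Ept_def by simp

lemma Ept_facts:
  "vdim (nsmd E i) (Ept E i z) = card {j. j < nsmd E i \<and> smd E i ! j \<le> z}
   \<and> vfin (nsmd E i) (Ept E i z) \<and> subsp (nsmd E i) (Ept E i z)"
  unfolding Ept_coord by (rule coord_dim)

lemma dapp_carrier: "dapp E i v \<in> carrier_vec (nsmd E i)"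
  unfolding dapp_def by simp

lemma dapp_add:
  assumes "u \<in> carrier_vec (nsmd E (Suc i))" "v \<in> carrier_vec (nsmd E (Suc i))"
  shows "dapp E i (u + v) = dapp E i u + dapp E i v"
  using assms unfolding dapp_def
  by (intro eq_vecI) (auto simp: distrib_left sum.distrib)

lemma dapp_smult:
  assumes "v \<in> carrier_vec (nsmd E (Suc i))"
  shows "dapp E i (c \<cdot>\<^sub>v v) = c \<cdot>\<^sub>v dapp E i v"
  using assms unfolding dapp_def
  by (intro eq_vecI) (auto simp: sum_distrib_left algebra_simps)

lemma eps_carrier: "eps_app M E aug z v \<in> carrier_vec (mdim M z)"
  unfolding eps_app_def by simp

lemma eps_add:
  assumes "u \<in> carrier_vec (nsmd E 0)" "v \<in> carrier_vec (nsmd E 0)"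
  shows "eps_app M E aug z (u + v) = eps_app M E aug z u + eps_app M E aug z v"
  using assms unfolding eps_app_def
  by (intro eq_vecI) (auto simp: distrib_right sum.distrib)

lemma eps_smult:
  assumes "v \<in> carrier_vec (nsmd E 0)"
  shows "eps_app M E aug z (c \<cdot>\<^sub>v v) = c \<cdot>\<^sub>v eps_app M E aug z v"
  using assms unfolding eps_app_def
  by (intro eq_vecI) (auto simp: sum_distrib_left algebra_simps)

lemma vdim_carrier: "vdim n (carrier_vec n :: 'k::field vec set) = n"
proof -
  have "carrier_vec n = {v \<in> carrier_vec n. \<forall>j<n. \<not> True \<longrightarrow> v $ j = (0::'k)}" by simp
  then show ?thesis using coord_dim[where Q="\<lambda>_. True" and n=n, where 'k='k] by simp
qed

lemma card_le_sum_cls: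
  "card {j. j < length l \<and> l ! j \<le> z} = (\<Sum>x\<in>{x. x \<le> z}. count (mset l) (x::'p::{finite,order}))"
proof (induction l rule: rev_induct)
  case Nil then show ?case by simp
next
  case (snoc a l)
  have "{j. j < length (l @ [a]) \<and> (l @ [a]) ! j \<le> z} =
        {j. j < length l \<and> l ! j \<le> z} \<union> (if a \<le> z then {length l} else {})"
    by (auto simp: nth_append less_Suc_eq)
  then have "card {j. j < length (l @ [a]) \<and> (l @ [a]) ! j \<le> z} =
        card {j. j < length l \<and> l ! j \<le> z} + (if a \<le> z then 1 else 0)"
    by (auto simp: card_insert_if)
  also have "\<dots> = (\<Sum>x\<in>{x. x \<le> z}. count (mset l) x) + (\<Sum>x\<in>{x. x \<le> z}. if x = a then 1 else 0)"
    using snoc by (simp add: sum.delta)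
  also have "\<dots> = (\<Sum>x\<in>{x. x \<le> z}. count (mset l) x + (if x = a then 1 else 0))"
    by (rule sum.distrib[symmetric])
  also have "\<dots> = (\<Sum>x\<in>{x. x \<le> z}. count (mset (l @ [a])) x)"
    by (rule sum.cong) auto
  finally show ?case .
qed

lemma euler:
  assumes res: "is_res_aug M E aug" and bnd: "\<forall>i\<ge>N. smd E i = []"
  shows "int (mdim M z) = (\<Sum>i<Suc N. (-1)^i * int (card {j. j < nsmd E i \<and> smd E i ! j \<le> z}))"
proof -
  define S where "S i = Ept E i z" for i
  define K where "K i = (if i = 0 then {v\<in>S 0. eps_app M E aug z v = 0\<^sub>v (mdim M z)}
      else {v \<in> S i. dapp E (i-1) v = 0\<^sub>v (nsmd E (i-1))})" for i
  define s where "s i = int (vdim (nsmd E i) (S i))" for i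
  define k where "k i = int (vdim (nsmd E i) (K i))" for i
  have R: "\<forall>z. eps_app M E aug z ` Ept E 0 z = carrier_vec (mdim M z)"
    "\<forall>z. {v \<in> Ept E 0 z. eps_app M E aug z v = 0\<^sub>v (mdim M z)} = dapp E 0 ` Ept E 1 z"
    "\<forall>i z. {v \<in> Ept E (Suc i) z. dapp E i v = 0\<^sub>v (nsmd E i)} = dapp E (Suc i) ` Ept E (Suc (Suc i)) z"
    using res unfolding is_res_aug_def by auto
  have img: "dapp E i ` S (Suc i) = K i" for i
  proof (cases i)
    case 0 then show ?thesis using R(2) unfolding S_def K_def by simp
  next
    case (Suc i') then show ?thesis using R(3)[rule_format, of i' z] unfolding S_def K_def by simp
  qed
  have Sc: "S i \<subseteq> carrier_vec (nsmd E i)" for i unfolding S_def Ept_def by auto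
  have s0: "s 0 = int (mdim M z) + k 0"
  proof -
    have "vdim (nsmd E 0) (S 0) = vdim (mdim M z) (eps_app M E aug z ` S 0) + vdim (nsmd E 0) {v\<in>S 0. eps_app M E aug z v = 0\<^sub>v (mdim M z)}"
      apply (rule rank_nullity_vec)
      using Ept_facts[of E 0 z] Sc[of 0] eps_add[of _ E _ M aug z] eps_smult[of _ E M aug z]
      by (auto simp: S_def eps_carrier subset_iff)
    then show ?thesis using R(1) vdim_carrier unfolding s_def k_def K_def S_def by simp
  qed
  have sS: "s (Suc i) = k i + k (Suc i)" for i
  proof -
    have "vdim (nsmd E (Suc i)) (S (Suc i)) = vdim (nsmd E i) (dapp E i ` S (Suc i)) + vdim (nsmd E (Suc i)) {v\<in>S (Suc i). dapp E i v = 0\<^sub>v (nsmd E i)}"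
      apply (rule rank_nullity_vec)
      using Ept_facts[of E "Suc i" z] Sc[of "Suc i"] dapp_add[of _ E i] dapp_smult[of _ E i] dapp_carrier[of E i]
      by (auto simp: S_def subset_iff)
    then show ?thesis using img[of i] unfolding s_def k_def K_def by simp
  qed
  have sc: "s i = int (card {j. j < nsmd E i \<and> smd E i ! j \<le> z})" for i
    using Ept_facts[of E i z] unfolding s_def S_def by simp
  have kN: "k N = 0"
  proof -
    have "nsmd E (Suc N) = 0" using bnd by (simp add: nsmd_def)
    then have "s (Suc N) = 0" using sc[of "Suc N"] by simp
    moreover have "k N \<ge> 0" "k (Suc N) \<ge> 0" unfolding k_def by auto
    ultimately show ?thesis using sS[of N] by simp
  qed
  have "(\<Sum>i<Suc N. (-1)^i * s i) = int (mdim M z) + (-1)^N * k N"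
    by (rule alt_telescope[OF s0 sS])
  then show ?thesis using kN sc by simp
qed

lemma alpha_fs:
  assumes "\<forall>i\<ge>N. A i = (\<lambda>_. 0)"
  shows "alpha_hat A x = (\<Sum>i<Suc N. (-1)^i * A i x)"
  unfolding alpha_hat_def
proof (rule sum.mono_neutral_left)
  show "finite {..<Suc N}" by simp
  show "{i. A i \<noteq> (\<lambda>_. 0)} \<subseteq> {..<Suc N}" using assms by (auto simp: not_less_eq[symmetric] not_le[symmetric]) 
  show "\<forall>i\<in>{..<Suc N} - {i. A i \<noteq> (\<lambda>_. 0)}. (-1) ^ i * A i x = 0" by auto
qed

lemma cls_bnd: "\<forall>i\<ge>N. smd E i = [] \<Longrightarrow> \<forall>i\<ge>N. cls E i = (\<lambda>_. 0)"
  unfolding cls_def by auto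

lemma mobius:
  fixes f g :: "'p::{finite,order} \<Rightarrow> int"
  assumes "\<And>z. (\<Sum>x\<in>{x. x \<le> z}. f x) = (\<Sum>x\<in>{x. x \<le> z}. g x)"
  shows "f = g"
proof
  fix z
  show "f z = g z"
  proof (induction z rule: measure_induct_rule[of "\<lambda>z. card {y. y < z}"])
    case (less z)
    have IH: "f y = g y" if "y < z" for y
    proof (rule less)
      have "{w. w < y} \<subset> {w. w < z}" using that by (auto intro: less_trans)
      then show "card {w. w < y} < card {w. w < z}" by (rule psubset_card_mono[rotated]) simp
    qed
    have split: "{x. x \<le> z} = insert z {x. x < z}" by auto
    have "(\<Sum>x\<in>{x. x < z}. f x) = (\<Sum>x\<in>{x. x < z}. g x)" using IH by (intro sum.cong) auto
    then show ?case using assms[of z] unfolding split by simp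
  qed
qed

lemma res_alpha_sum:
  fixes E :: "('p::{finite,order}, 'k::field) cplx"
  assumes "is_res_aug M E aug"
  shows "(\<Sum>x\<in>{x. x \<le> z}. alpha_hat (cls E) x) = int (mdim M z)"
proof -
  obtain N where N: "\<forall>i\<ge>N. smd E i = []" using assms unfolding is_res_aug_def is_cplx_def by auto
  have "int (mdim M z) = (\<Sum>i<Suc N. (-1)^i * int (card {j. j < nsmd E i \<and> smd E i ! j \<le> z}))"
    by (rule euler[OF assms N])
  also have "\<dots> = (\<Sum>i<Suc N. (-1)^i * (\<Sum>x\<in>{x. x \<le> z}. cls E i x))"
    by (simp add: card_le_sum_cls[of "smd E _" z, folded nsmd_def] cls_def)
  also have "\<dots> = (\<Sum>x\<in>{x. x \<le> z}. \<Sum>i<Suc N. (-1)^i * cls E i x)"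
    by (simp add: sum_distrib_left sum.swap[of _ "{x. x \<le> z}"])
  also have "\<dots> = (\<Sum>x\<in>{x. x \<le> z}. alpha_hat (cls E) x)"
    using alpha_fs[OF cls_bnd[OF N]] by simp
  finally show ?thesis by simp
qed

lemma res_alpha_eq:
  fixes E F :: "('p::{finite,order}, 'k::field) cplx"
  assumes "is_proj_res M E" "is_proj_res M F"
  shows "alpha_hat (cls E) = alpha_hat (cls F)"
proof -
  obtain a b where "is_res_aug M E a" "is_res_aug M F b" using assms unfolding is_proj_res_def by auto
  then show ?thesis by (intro mobius) (simp add: res_alpha_sum)
qed



definition addcone :: "('p, 'k::field) cplx \<Rightarrow> 'p \<Rightarrow> nat \<Rightarrow> ('p, 'k) cplx" where
 "addcone E x a = \<lparr> smd = (\<lambda>i. smd E i @ (if i = a \<or> i = Suc a then [x] else [])),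
    dmat = (\<lambda>i j l. if j < nsmd E (Suc i) \<and> l < nsmd E i then dmat E i j l
                    else if i = a \<and> j = nsmd E (Suc a) \<and> l = nsmd E a then 1 else 0) \<rparr>"

definition vtr :: "nat \<Rightarrow> 'k vec \<Rightarrow> 'k vec" where
 "vtr n v = vec n (\<lambda>j. v $ j)"

lemma nsmd_addcone: "nsmd (addcone E x a) i = nsmd E i + (if i = a \<or> i = Suc a then 1 else 0)"
  by (simp add: addcone_def nsmd_def)

lemma smd_addcone1: "j < nsmd E i \<Longrightarrow> smd (addcone E x a) i ! j = smd E i ! j"
  by (simp add: addcone_def nsmd_def nth_append)

lemma smd_addcone2: "i = a \<or> i = Suc a \<Longrightarrow> smd (addcone E x a) i ! nsmd E i = x"
  by (auto simp add: addcone_def nsmd_def nth_append)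

lemma dmat_addcone: "dmat (addcone E x a) i j l = (if j < nsmd E (Suc i) \<and> l < nsmd E i then dmat E i j l
                    else if i = a \<and> j = nsmd E (Suc a) \<and> l = nsmd E a then 1 else 0)"
  by (simp add: addcone_def)

lemma cls_addcone: "cls (addcone E x a) i y = cls E i y + cone_cls x a i y"
  unfolding cls_def cone_cls_def addcone_def by (cases "i = a \<or> i = Suc a") auto

lemma dapp_cong: "(\<And>j. j < nsmd E (Suc i) \<Longrightarrow> u $ j = u' $ j) \<Longrightarrow> dapp E i u = dapp E i u'"
  unfolding dapp_def by (intro eq_vecI) auto

lemma dapp_vtr: "dapp E i (vtr (nsmd E (Suc i)) v) = dapp E i v"
  by (rule dapp_cong) (simp add: vtr_def)

lemma dapp_addcone: "dapp (addcone E x a) i v = vec (nsmd (addcone E x a) i)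
   (\<lambda>l. if l < nsmd E i then dapp E i v $ l else if i = a then v $ nsmd E (Suc a) else 0)"
proof (rule eq_vecI)
  show "dim_vec (dapp (addcone E x a) i v) = dim_vec (vec (nsmd (addcone E x a) i)
   (\<lambda>l. if l < nsmd E i then dapp E i v $ l else if i = a then v $ nsmd E (Suc a) else 0))"
    by (simp add: dapp_def)
  fix l assume "l < dim_vec (vec (nsmd (addcone E x a) i)
   (\<lambda>l. if l < nsmd E i then dapp E i v $ l else if i = a then v $ nsmd E (Suc a) else 0))"
  then have l: "l < nsmd (addcone E x a) i" by simp
  let ?n = "nsmd E (Suc i)"
  let ?f = "\<lambda>j. dmat (addcone E x a) i j l * v $ j"
  have sp: "(\<Sum>j<nsmd (addcone E x a) (Suc i). ?f j) = (\<Sum>j<?n. ?f j) + (if i + 1 = a \<or> i = a then ?f ?n else 0)"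
    by (simp add: nsmd_addcone)
  show "dapp (addcone E x a) i v $ l = vec (nsmd (addcone E x a) i)
   (\<lambda>l. if l < nsmd E i then dapp E i v $ l else if i = a then v $ nsmd E (Suc a) else 0) $ l"
  proof (cases "l < nsmd E i")
    case True
    have "(\<Sum>j<?n. ?f j) = (\<Sum>j<?n. dmat E i j l * v $ j)"
      using True by (intro sum.cong) (auto simp: dmat_addcone)
    moreover have "?f ?n = 0" using True by (auto simp: dmat_addcone)
    ultimately show ?thesis using l True sp by (simp add: dapp_def)
  next
    case False
    have "(\<Sum>j<?n. ?f j) = 0"
      using False by (intro sum.neutral) (auto simp: dmat_addcone)
    moreover have "l = nsmd E i" "i = a \<or> i = Suc a" using False l by (auto simp: nsmd_addcone split: if_splits)
    ultimately show ?thesis using l False sp by (auto simp: dapp_def dmat_addcone)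
  qed
qed

lemma eps_cong: "(\<And>j. j < nsmd E 0 \<Longrightarrow> u $ j = u' $ j) \<Longrightarrow> eps_app M E aug z u = eps_app M E aug z u'"
  unfolding eps_app_def by (intro eq_vecI) auto

lemma mat_zero_vec_index:
  assumes "A \<in> carrier_mat nr nc" "r < nr"
  shows "(A *\<^sub>v 0\<^sub>v nc) $ r = (0::'k::field)"
  using assms by (simp add: scalar_prod_def)

lemma eps_addcone:
  assumes pm: "is_pmod M"
  shows "eps_app M (addcone E x a) (\<lambda>j. if j < nsmd E 0 then aug j else 0\<^sub>v (mdim M x)) z v = eps_app M E aug z v"
proof (rule eq_vecI)
  show "dim_vec (eps_app M (addcone E x a) (\<lambda>j. if j < nsmd E 0 then aug j else 0\<^sub>v (mdim M x)) z v) =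
    dim_vec (eps_app M E aug z v)" by (simp add: eps_app_def)
  fix r assume "r < dim_vec (eps_app M E aug z v)"
  then have r: "r < mdim M z" by (simp add: eps_app_def)
  let ?aug = "(\<lambda>j. if j < nsmd E 0 then aug j else 0\<^sub>v (mdim M x))"
  let ?E = "addcone E x a"
  let ?A = "{j. j < nsmd ?E 0 \<and> smd ?E 0 ! j \<le> z}"
  let ?B = "{j. j < nsmd E 0 \<and> smd E 0 ! j \<le> z}"
  have "(\<Sum>j\<in>?A. v $ j * (mact M (smd ?E 0 ! j) z *\<^sub>v ?aug j) $ r)
      = (\<Sum>j\<in>?B. v $ j * (mact M (smd ?E 0 ! j) z *\<^sub>v ?aug j) $ r)"
  proof (rule sum.mono_neutral_right)
    show "finite ?A" by simp
    show "?B \<subseteq> ?A" by (auto simp: nsmd_addcone smd_addcone1)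
    show "\<forall>j\<in>?A - ?B. v $ j * (mact M (smd ?E 0 ! j) z *\<^sub>v ?aug j) $ r = 0"
    proof
      fix j assume j: "j \<in> ?A - ?B"
      then have jA: "j < nsmd ?E 0" "smd ?E 0 ! j \<le> z" and jB: "\<not> (j < nsmd E 0 \<and> smd E 0 ! j \<le> z)" by auto
      have "\<not> j < nsmd E 0" using jA jB smd_addcone1 by metis
      then have "j = nsmd E 0" "0 = a \<or> 0 = Suc a" using jA(1) by (auto simp: nsmd_addcone split: if_splits)
      then have "smd ?E 0 ! j = x" "x \<le> z" using j smd_addcone2[of 0 a E x] by auto
      then have "(mact M (smd ?E 0 ! j) z *\<^sub>v ?aug j) $ r = 0"
      proof -
        have "mact M x z \<in> carrier_mat (mdim M z) (mdim M x)" using pm \<open>x \<le> z\<close> unfolding is_pmod_def by blast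
        then show ?thesis using r \<open>j = nsmd E 0\<close> \<open>smd ?E 0 ! j = x\<close> by (simp add: mat_zero_vec_index)
      qed
      then show "v $ j * (mact M (smd ?E 0 ! j) z *\<^sub>v ?aug j) $ r = 0" by simp
    qed
  qed
  also have "\<dots> = (\<Sum>j\<in>?B. v $ j * (mact M (smd E 0 ! j) z *\<^sub>v aug j) $ r)"
    by (intro sum.cong) (auto simp: smd_addcone1)
  finally show "eps_app M ?E ?aug z v $ r = eps_app M E aug z v $ r"
    using r by (simp add: eps_app_def)
qed

lemma Ept_iff: "v \<in> Ept E i z \<longleftrightarrow> dim_vec v = nsmd E i \<and> (\<forall>j<nsmd E i. \<not> smd E i ! j \<le> z \<longrightarrow> v $ j = 0)"
  unfolding Ept_def carrier_vec_def mem_Collect_eq by (rule refl)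

lemma Ept_addcone_iff: "v \<in> Ept (addcone E x a) i z \<longleftrightarrow> dim_vec v = nsmd (addcone E x a) i
   \<and> (\<forall>j<nsmd E i. \<not> smd E i ! j \<le> z \<longrightarrow> v $ j = 0)
   \<and> ((i = a \<or> i = Suc a) \<and> \<not> x \<le> z \<longrightarrow> v $ nsmd E i = 0)"
proof -
  have "(\<forall>j<nsmd (addcone E x a) i. \<not> smd (addcone E x a) i ! j \<le> z \<longrightarrow> v $ j = 0) \<longleftrightarrow>
     (\<forall>j<nsmd E i. \<not> smd E i ! j \<le> z \<longrightarrow> v $ j = 0)
   \<and> ((i = a \<or> i = Suc a) \<and> \<not> x \<le> z \<longrightarrow> v $ nsmd E i = 0)" (is "?L \<longleftrightarrow> ?R")
  proof
    assume L: ?L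
    show ?R
    proof (intro conjI allI impI)
      fix j assume "j < nsmd E i" "\<not> smd E i ! j \<le> z"
      then show "v $ j = 0" using L[rule_format, of j] smd_addcone1[of j E i x a] by (simp add: nsmd_addcone)
    next
      assume "(i = a \<or> i = Suc a) \<and> \<not> x \<le> z"
      then show "v $ nsmd E i = 0" using L[rule_format, of "nsmd E i"] smd_addcone2[of i a E x] by (simp add: nsmd_addcone)
    qed
  next
    assume R: ?R
    show ?L
    proof (intro allI impI)
      fix j assume j: "j < nsmd (addcone E x a) i" "\<not> smd (addcone E x a) i ! j \<le> z"
      show "v $ j = 0"
      proof (cases "j < nsmd E i")
        case True then show ?thesis using R j smd_addcone1[of j E i x a] by simp
      next
        case False
        then have "j = nsmd E i" "i = a \<or> i = Suc a" using j(1) by (auto simp: nsmd_addcone split: if_splits)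
        then show ?thesis using R j smd_addcone2[of i a E x] by simp
      qed
    qed
  qed
  then show ?thesis unfolding Ept_iff by simp
qed

lemma vtr_Ept: "v \<in> Ept (addcone E x a) i z \<Longrightarrow> vtr (nsmd E i) v \<in> Ept E i z"
  by (subst Ept_iff) (auto simp: Ept_addcone_iff vtr_def)

lemma img_E:
  assumes "is_res_aug M E aug" "u \<in> Ept E (Suc i) z"
  shows "dapp E i u \<in> Ept E i z"
proof (cases i)
  case 0
  have "{v \<in> Ept E 0 z. eps_app M E aug z v = 0\<^sub>v (mdim M z)} = dapp E 0 ` Ept E 1 z"
    using assms(1) unfolding is_res_aug_def by blast
  moreover have "dapp E 0 u \<in> dapp E 0 ` Ept E 1 z" using assms(2) 0 by simp
  ultimately show ?thesis using 0 by (metis (no_types, lifting) mem_Collect_eq)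
next
  case (Suc i')
  have "{v \<in> Ept E (Suc i') z. dapp E i' v = 0\<^sub>v (nsmd E i')} = dapp E (Suc i') ` Ept E (Suc (Suc i')) z"
    using assms(1) unfolding is_res_aug_def by blast
  moreover have "dapp E (Suc i') u \<in> dapp E (Suc i') ` Ept E (Suc (Suc i')) z" using assms(2) Suc by simp
  ultimately show ?thesis using Suc by (metis (no_types, lifting) mem_Collect_eq)
qed

lemma img_cone:
  assumes img: "\<And>u. u \<in> Ept E (Suc i) z \<Longrightarrow> dapp E i u \<in> Ept E i z"
    and u: "u \<in> Ept (addcone E x a) (Suc i) z"
  shows "dapp (addcone E x a) i u \<in> Ept (addcone E x a) i z"
proof -
  have u0: "dapp E i (vtr (nsmd E (Suc i)) u) \<in> Ept E i z" using img vtr_Ept[OF u] by blast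
  have uz: "\<not> x \<le> z \<Longrightarrow> u $ nsmd E (Suc a) = 0" if "i = a" using u that by (simp add: Ept_addcone_iff)
  show ?thesis
    using u0 uz by (subst Ept_addcone_iff) (auto simp: Ept_iff dapp_vtr dapp_addcone nsmd_addcone)
qed

lemma dd_cone:
  assumes dd: "\<And>v. v \<in> Ept E (Suc (Suc i)) z \<Longrightarrow> dapp E i (dapp E (Suc i) v) = 0\<^sub>v (nsmd E i)"
    and v: "v \<in> Ept (addcone E x a) (Suc (Suc i)) z"
  shows "dapp (addcone E x a) i (dapp (addcone E x a) (Suc i) v) = 0\<^sub>v (nsmd (addcone E x a) i)"
proof -
  have v0: "dapp E i (dapp E (Suc i) v) = 0\<^sub>v (nsmd E i)"
    using dd[OF vtr_Ept[OF v]] by (simp add: dapp_vtr)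
  have c: "dapp E i (dapp (addcone E x a) (Suc i) v) = dapp E i (dapp E (Suc i) v)"
    by (rule dapp_cong) (simp add: dapp_addcone nsmd_addcone)
  show ?thesis
  proof (rule eq_vecI)
    fix l assume "l < dim_vec (0\<^sub>v (nsmd (addcone E x a) i) :: 'a vec)"
    then have l: "l < nsmd (addcone E x a) i" by simp
    show "dapp (addcone E x a) i (dapp (addcone E x a) (Suc i) v) $ l = 0\<^sub>v (nsmd (addcone E x a) i) $ l"
    proof (cases "l < nsmd E i")
      case True
      have "dapp E i (dapp (addcone E x a) (Suc i) v) $ l = 0" using c v0 True by simp
      then show ?thesis using l True by (simp add: dapp_addcone[of E x a i "dapp (addcone E x a) (Suc i) v"])
    next
      case False
      then show ?thesis using l by (simp add: dapp_addcone nsmd_addcone)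
    qed
  qed (simp add: dapp_def)
qed

lemma res_addcone:
  fixes E :: "('p::order, 'k::field) cplx" and M :: "('p, 'k) pmod"
  assumes pm: "is_pmod M" and res: "is_res_aug M E aug"
  shows "is_res_aug M (addcone E x a) (\<lambda>j. if j < nsmd E 0 then aug j else 0\<^sub>v (mdim M x))"
proof -
  let ?E = "addcone E x a"
  let ?aug = "\<lambda>j. if j < nsmd E 0 then aug j else 0\<^sub>v (mdim M x)"
  note r = res[unfolded is_res_aug_def]
  note rc = r[THEN conjunct1, unfolded is_cplx_def]
  have C1: "\<And>i j l. j < nsmd E (Suc i) \<Longrightarrow> l < nsmd E i \<Longrightarrow> \<not> (smd E i ! l \<le> smd E (Suc i) ! j) \<Longrightarrow> dmat E i j l = 0"
    using rc[THEN conjunct1] by blast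
  have C2: "\<And>i z v. v \<in> Ept E (Suc (Suc i)) z \<Longrightarrow> dapp E i (dapp E (Suc i) v) = 0\<^sub>v (nsmd E i)"
    using rc[THEN conjunct2, THEN conjunct1] by blast
  have C3: "\<exists>n. \<forall>i \<ge> n. smd E i = []"
    using rc[THEN conjunct2, THEN conjunct2] .
  have A1: "\<And>j. j < nsmd E 0 \<Longrightarrow> aug j \<in> carrier_vec (mdim M (smd E 0 ! j))"
    using r[THEN conjunct2, THEN conjunct1] by blast
  have R1: "\<And>z. eps_app M E aug z ` Ept E 0 z = carrier_vec (mdim M z)"
    using r[THEN conjunct2, THEN conjunct2, THEN conjunct1] by (rule spec)
  have R2: "\<And>z. {v \<in> Ept E 0 z. eps_app M E aug z v = 0\<^sub>v (mdim M z)} = dapp E 0 ` Ept E 1 z"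
    using r[THEN conjunct2, THEN conjunct2, THEN conjunct2, THEN conjunct1] by (rule spec)
  have R3: "\<And>i z. {v \<in> Ept E (Suc i) z. dapp E i v = 0\<^sub>v (nsmd E i)} = dapp E (Suc i) ` Ept E (Suc (Suc i)) z"
    using r[THEN conjunct2, THEN conjunct2, THEN conjunct2, THEN conjunct2] by blast
  have epsE: "eps_app M ?E ?aug z v = eps_app M E aug z v" for z v using eps_addcone[OF pm] .
  have imgE: "\<And>u. u \<in> Ept E (Suc i) z \<Longrightarrow> dapp E i u \<in> Ept E i z" for i z using img_E[OF res] .
  have imgC: "u \<in> Ept ?E (Suc i) z \<Longrightarrow> dapp ?E i u \<in> Ept ?E i z" for u i z
    using img_cone[OF imgE] .
  have ddC: "v \<in> Ept ?E (Suc (Suc i)) z \<Longrightarrow> dapp ?E i (dapp ?E (Suc i) v) = 0\<^sub>v (nsmd ?E i)" for v i z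
    using dd_cone[OF C2] .
  define pad where "pad i u t = vec (nsmd ?E i) (\<lambda>j. if j < nsmd E i then u $ j else t)" for i u and t :: 'k
  have G1: "is_cplx ?E"
    unfolding is_cplx_def
  proof (intro conjI allI impI ballI)
    fix i j l assume h: "j < nsmd ?E (Suc i) \<and> l < nsmd ?E i \<and> \<not> smd ?E i ! l \<le> smd ?E (Suc i) ! j"
    show "dmat ?E i j l = 0"
    proof (cases "j < nsmd E (Suc i) \<and> l < nsmd E i")
      case True then show ?thesis using h C1 by (simp add: dmat_addcone smd_addcone1)
    next
      case False
      then show ?thesis using h smd_addcone2[of a a E x] smd_addcone2[of "Suc a" a E x]
        by (auto simp: dmat_addcone)
    qed
  next
    fix i z v assume "v \<in> Ept ?E (Suc (Suc i)) z"
    then show "dapp ?E i (dapp ?E (Suc i) v) = 0\<^sub>v (nsmd ?E i)" by (rule ddC)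
  next
    obtain n where n: "\<forall>i \<ge> n. smd E i = []" using C3 by blast
    show "\<exists>n. \<forall>i \<ge> n. smd ?E i = []"
      by (rule exI[of _ "max n (Suc (Suc a))"]) (auto simp: addcone_def n)
  qed
  have G2: "\<forall>j < nsmd ?E 0. ?aug j \<in> carrier_vec (mdim M (smd ?E 0 ! j))"
  proof (intro allI impI)
    fix j assume j: "j < nsmd ?E 0"
    show "?aug j \<in> carrier_vec (mdim M (smd ?E 0 ! j))"
    proof (cases "j < nsmd E 0")
      case True then show ?thesis using A1 by (simp add: smd_addcone1)
    next
      case False
      then have "j = nsmd E 0" "0 = a \<or> 0 = Suc a" using j by (auto simp: nsmd_addcone split: if_splits)
      then show ?thesis using smd_addcone2[of 0 a E x] by simp
    qed
  qed
  have G3: "\<forall>z. eps_app M ?E ?aug z ` Ept ?E 0 z = carrier_vec (mdim M z)"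
  proof (intro allI equalityI subsetI)
    fix z w assume "w \<in> eps_app M ?E ?aug z ` Ept ?E 0 z"
    then show "w \<in> carrier_vec (mdim M z)" using eps_carrier by blast
  next
    fix z and w :: "'k vec" assume "w \<in> carrier_vec (mdim M z)"
    then obtain v where v: "v \<in> Ept E 0 z" "w = eps_app M E aug z v" using R1[of z] by blast
    have "pad 0 v 0 \<in> Ept ?E 0 z" using v(1) by (subst Ept_addcone_iff) (auto simp: pad_def Ept_iff nsmd_addcone)
    moreover have "eps_app M ?E ?aug z (pad 0 v 0) = w"
      unfolding epsE v(2) by (rule eps_cong) (simp add: pad_def nsmd_addcone)
    ultimately show "w \<in> eps_app M ?E ?aug z ` Ept ?E 0 z" by blast
  qed
  have G4: "\<forall>z. {v \<in> Ept ?E 0 z. eps_app M ?E ?aug z v = 0\<^sub>v (mdim M z)} = dapp ?E 0 ` Ept ?E 1 z"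
  proof (intro allI equalityI subsetI)
    fix z v assume "v \<in> {v \<in> Ept ?E 0 z. eps_app M ?E ?aug z v = 0\<^sub>v (mdim M z)}"
    then have v: "v \<in> Ept ?E 0 z" "eps_app M E aug z v = 0\<^sub>v (mdim M z)" by (auto simp: epsE)
    have w: "vtr (nsmd E 0) v \<in> Ept E 0 z" using vtr_Ept[OF v(1)] .
    have "eps_app M E aug z (vtr (nsmd E 0) v) = eps_app M E aug z v" by (rule eps_cong) (simp add: vtr_def)
    then have "vtr (nsmd E 0) v \<in> {v \<in> Ept E 0 z. eps_app M E aug z v = 0\<^sub>v (mdim M z)}" using w v(2) by simp
    then have "vtr (nsmd E 0) v \<in> dapp E 0 ` Ept E 1 z" by (simp only: R2)
    then obtain u0 where u0: "u0 \<in> Ept E 1 z" "vtr (nsmd E 0) v = dapp E 0 u0" by blast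
    define u where "u = pad 1 u0 (if a = 0 then v $ nsmd E 0 else 0)"
    have vz: "a = 0 \<Longrightarrow> \<not> x \<le> z \<Longrightarrow> v $ nsmd E 0 = 0" using v(1) by (simp add: Ept_addcone_iff)
    have "u \<in> Ept ?E 1 z" using u0(1) vz unfolding u_def by (subst Ept_addcone_iff) (auto simp: pad_def Ept_iff nsmd_addcone)
    moreover have "dapp ?E 0 u = v"
    proof (rule eq_vecI)
      show "dim_vec (dapp ?E 0 u) = dim_vec v" using v(1) by (simp add: Ept_addcone_iff dapp_addcone)
      fix l assume "l < dim_vec v"
      then have l: "l < nsmd ?E 0" using v(1) by (simp add: Ept_addcone_iff)
      have d: "dapp E 0 u = dapp E 0 u0" by (rule dapp_cong) (simp add: u_def pad_def nsmd_addcone)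
      show "dapp ?E 0 u $ l = v $ l"
      proof (cases "l < nsmd E 0")
        case True
        have "v $ l = vtr (nsmd E 0) v $ l" using True by (simp add: vtr_def)
        also have "\<dots> = dapp E 0 u0 $ l" using u0(2) by simp
        finally have "v $ l = dapp E 0 u0 $ l" .
        then show ?thesis using True l d by (simp add: dapp_addcone)
      next
        case False
        then have "l = nsmd E 0" "a = 0" using l by (auto simp: nsmd_addcone split: if_splits)
        then show ?thesis using l by (simp add: dapp_addcone u_def pad_def nsmd_addcone)
      qed
    qed
    ultimately show "v \<in> dapp ?E 0 ` Ept ?E 1 z" by blast
  next
    fix z v assume "v \<in> dapp ?E 0 ` Ept ?E 1 z"
    then obtain u where u: "u \<in> Ept ?E 1 z" "v = dapp ?E 0 u" by blast
    have vE: "v \<in> Ept ?E 0 z" using imgC[of u 0 z] u by simp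
    have uu: "vtr (nsmd E 1) u \<in> Ept E 1 z" using vtr_Ept[OF u(1)] .
    have "dapp E 0 (vtr (nsmd E 1) u) \<in> {v \<in> Ept E 0 z. eps_app M E aug z v = 0\<^sub>v (mdim M z)}"
      using imageI[OF uu, of "dapp E 0"] by (simp only: R2[symmetric])
    then have e0: "eps_app M E aug z (dapp E 0 u) = 0\<^sub>v (mdim M z)" by (simp add: dapp_vtr)
    have "eps_app M ?E ?aug z v = eps_app M E aug z (dapp E 0 u)"
      unfolding epsE u(2) by (rule eps_cong) (simp add: dapp_addcone nsmd_addcone)
    then show "v \<in> {v \<in> Ept ?E 0 z. eps_app M ?E ?aug z v = 0\<^sub>v (mdim M z)}" using vE e0 by simp
  qed
  have G5: "\<forall>i z. {v \<in> Ept ?E (Suc i) z. dapp ?E i v = 0\<^sub>v (nsmd ?E i)} = dapp ?E (Suc i) ` Ept ?E (Suc (Suc i)) z"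
  proof (intro allI equalityI subsetI)
    fix i z v assume "v \<in> {v \<in> Ept ?E (Suc i) z. dapp ?E i v = 0\<^sub>v (nsmd ?E i)}"
    then have v: "v \<in> Ept ?E (Suc i) z" "dapp ?E i v = 0\<^sub>v (nsmd ?E i)" by auto
    have w: "vtr (nsmd E (Suc i)) v \<in> Ept E (Suc i) z" using vtr_Ept[OF v(1)] .
    have dw: "dapp E i (vtr (nsmd E (Suc i)) v) = 0\<^sub>v (nsmd E i)"
    proof (rule eq_vecI)
      fix l assume "l < dim_vec (0\<^sub>v (nsmd E i) :: 'k vec)"
      then have l: "l < nsmd E i" by simp
      have "dapp ?E i v $ l = 0" using v(2) l by (simp add: nsmd_addcone)
      then show "dapp E i (vtr (nsmd E (Suc i)) v) $ l = 0\<^sub>v (nsmd E i) $ l"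
        using l by (simp add: dapp_vtr dapp_addcone nsmd_addcone)
    qed (simp add: dapp_def)
    have "vtr (nsmd E (Suc i)) v \<in> {v \<in> Ept E (Suc i) z. dapp E i v = 0\<^sub>v (nsmd E i)}" using w dw by simp
    then have "vtr (nsmd E (Suc i)) v \<in> dapp E (Suc i) ` Ept E (Suc (Suc i)) z" by (simp only: R3)
    then obtain u0 where u0: "u0 \<in> Ept E (Suc (Suc i)) z" "vtr (nsmd E (Suc i)) v = dapp E (Suc i) u0" by blast
    define u where "u = pad (Suc (Suc i)) u0 (if Suc i = a then v $ nsmd E (Suc i) else 0)"
    have vz: "Suc i = a \<Longrightarrow> \<not> x \<le> z \<Longrightarrow> v $ nsmd E (Suc i) = 0" using v(1) by (simp add: Ept_addcone_iff)
    have vz2: "i = a \<Longrightarrow> v $ nsmd E (Suc i) = 0"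
    proof -
      assume "i = a"
      then have "dapp ?E i v $ nsmd E i = v $ nsmd E (Suc i)" by (simp add: dapp_addcone nsmd_addcone)
      moreover have "dapp ?E i v $ nsmd E i = 0" using v(2) \<open>i = a\<close> by (simp add: nsmd_addcone)
      ultimately show ?thesis by simp
    qed
    have "u \<in> Ept ?E (Suc (Suc i)) z" using u0(1) vz unfolding u_def by (subst Ept_addcone_iff) (auto simp: pad_def Ept_iff nsmd_addcone)
    moreover have "dapp ?E (Suc i) u = v"
    proof (rule eq_vecI)
      show "dim_vec (dapp ?E (Suc i) u) = dim_vec v" using v(1) by (simp add: Ept_addcone_iff dapp_addcone)
      fix l assume "l < dim_vec v"
      then have l: "l < nsmd ?E (Suc i)" using v(1) by (simp add: Ept_addcone_iff)
      have d: "dapp E (Suc i) u = dapp E (Suc i) u0" by (rule dapp_cong) (simp add: u_def pad_def nsmd_addcone)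
      show "dapp ?E (Suc i) u $ l = v $ l"
      proof (cases "l < nsmd E (Suc i)")
        case True
        have "v $ l = vtr (nsmd E (Suc i)) v $ l" using True by (simp add: vtr_def)
        also have "\<dots> = dapp E (Suc i) u0 $ l" using u0(2) by simp
        finally have "v $ l = dapp E (Suc i) u0 $ l" .
        then show ?thesis using True l d by (simp add: dapp_addcone)
      next
        case False
        then have "l = nsmd E (Suc i)" "Suc i = a \<or> i = a" using l by (auto simp: nsmd_addcone split: if_splits)
        then show ?thesis using l vz2 by (auto simp: dapp_addcone u_def pad_def nsmd_addcone)
      qed
    qed
    ultimately show "v \<in> dapp ?E (Suc i) ` Ept ?E (Suc (Suc i)) z" by blast
  next
    fix i z v assume "v \<in> dapp ?E (Suc i) ` Ept ?E (Suc (Suc i)) z"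
    then obtain u where u: "u \<in> Ept ?E (Suc (Suc i)) z" "v = dapp ?E (Suc i) u" by blast
    then show "v \<in> {v \<in> Ept ?E (Suc i) z. dapp ?E i v = 0\<^sub>v (nsmd ?E i)}"
      using imgC[OF u(1)] ddC[OF u(1)] by simp
  qed
  show ?thesis unfolding is_res_aug_def using G1 G2 G3 G4 G5 by (intro conjI)
qed



lemma cs_add:
  assumes "B \<in> cone_subgroup" "A \<in> cone_subgroup"
  shows "(\<lambda>j y. A j y + B j y) \<in> cone_subgroup"
  using assms(1)
proof induction
  case zero then show ?case using assms(2) by simp
next
  case (add B x a)
  have "(\<lambda>j y. (A j y + B j y) + cone_cls x a j y) \<in> cone_subgroup"
    using cone_subgroup.add[OF add.IH] by simp
  then show ?case by (simp add: add.assoc)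
next
  case (sub B x a)
  have "(\<lambda>j y. (A j y + B j y) - cone_cls x a j y) \<in> cone_subgroup"
    using cone_subgroup.sub[OF sub.IH] by simp
  then show ?case by (simp add: add_diff_eq)
qed

lemma cs_mult_nat: "(\<lambda>j y. int n * cone_cls x a j y) \<in> cone_subgroup"
proof (induction n)
  case 0 then show ?case using cone_subgroup.zero by simp
next
  case (Suc n)
  from cone_subgroup.add[OF Suc, of x a] show ?case by (simp add: algebra_simps)
qed

lemma cs_mult_neg: "(\<lambda>j y. - int n * cone_cls x a j y) \<in> cone_subgroup"
proof (induction n)
  case 0 then show ?case using cone_subgroup.zero by simp
next
  case (Suc n)
  have "(\<lambda>j y. - int (Suc n) * cone_cls x a j y) = (\<lambda>j y. - int n * cone_cls x a j y - cone_cls x a j y)"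
    by (intro ext) (simp add: algebra_simps)
  then show ?case using cone_subgroup.sub[OF Suc, of x a] by simp
qed

lemma cs_mult: "(\<lambda>j y. c * cone_cls x a j y) \<in> cone_subgroup"
proof (cases "c \<ge> 0")
  case True
  then have "c = int (nat c)" by simp
  then show ?thesis using cs_mult_nat[of "nat c" x a] by simp
next
  case False
  then have "c = - int (nat (- c))" by simp
  then show ?thesis using cs_mult_neg[of "nat (- c)" x a] by simp
qed

lemma cs_sum:
  assumes "finite X" "\<And>x. x \<in> X \<Longrightarrow> f x \<in> cone_subgroup"
  shows "(\<lambda>j y. \<Sum>x\<in>X. f x j y) \<in> cone_subgroup"
  using assms
proof (induction X rule: finite_induct)
  case empty then show ?case using cone_subgroup.zero by simp
next
  case (insert x X)
  have "(\<lambda>j y. (\<Sum>x\<in>X. f x j y) + f x j y) \<in> cone_subgroup"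
    using cs_add[of "f x" "\<lambda>j y. \<Sum>x\<in>X. f x j y"] insert by simp
  then show ?case using insert by (simp add: add.commute)
qed

lemma cs_fs:
  fixes A :: "nat \<Rightarrow> 'p::finite \<Rightarrow> int"
  assumes "\<forall>i\<ge>N. A i = (\<lambda>_. 0)" "\<forall>x. (\<Sum>i<N. (-1)^i * A i x) = 0"
  shows "A \<in> cone_subgroup"
  using assms
proof (induction N arbitrary: A)
  case 0
  then have "A = (\<lambda>_ _. 0)" by auto
  then show ?case using cone_subgroup.zero by simp
next
  case (Suc N)
  show ?case
  proof (cases N)
    case 0
    have a0: "A 0 x = 0" for x using Suc.prems(2) 0 by simp
    have "A i x = 0" for i x
    proof (cases "i = 0")
      case True then show ?thesis using a0 by simp
    next
      case False
      then have "A i = (\<lambda>_. 0)" using Suc.prems(1) \<open>N = 0\<close> by simp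
      then show ?thesis by simp
    qed
    then have "A = (\<lambda>_ _. 0)" by (intro ext)
    then show ?thesis using cone_subgroup.zero by simp
  next
    case (Suc M)
    define A' where "A' = (\<lambda>j y. A j y - (if j = M \<or> j = N then A N y else 0))"
    have A'0: "\<forall>i\<ge>N. A' i = (\<lambda>_. 0)"
    proof (intro allI impI ext)
      fix i y assume "N \<le> i"
      show "A' i y = 0"
      proof (cases "i = N")
        case True then show ?thesis by (simp add: A'_def)
      next
        case False
        then have "A i = (\<lambda>_. 0)" using Suc.prems(1) \<open>N \<le> i\<close> by simp
        moreover have "i \<noteq> M" using \<open>N \<le> i\<close> \<open>N = Suc M\<close> by simp
        ultimately show ?thesis by (simp add: A'_def False)
      qed
    qed
    have A'1: "\<forall>x. (\<Sum>i<N. (-1)^i * A' i x) = 0"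
    proof
      fix x
      have "(\<Sum>i<N. (-1)^i * A' i x) = (\<Sum>i<N. (-1)^i * A i x) - (\<Sum>i<N. (-1)^i * (if i = M \<or> i = N then A N x else 0))"
        unfolding A'_def by (simp add: right_diff_distrib sum_subtractf)
      also have "(\<Sum>i<N. (-1)^i * (if i = M \<or> i = N then A N x else 0)) = (\<Sum>i<N. if i = M then (-1)^M * A N x else 0)"
        by (rule sum.cong) auto
      also have "\<dots> = (-1)^M * A N x" using \<open>N = Suc M\<close> by simp
      finally have "(\<Sum>i<N. (-1)^i * A' i x) = (\<Sum>i<N. (-1)^i * A i x) - (-1)^M * A N x" .
      also have "(\<Sum>i<N. (-1)^i * A i x) = - ((-1)^N * A N x)"
        using Suc.prems(2)[rule_format, of x] unfolding sum.lessThan_Suc by linarith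
      finally show "(\<Sum>i<N. (-1)^i * A' i x) = 0" using \<open>N = Suc M\<close> by simp
    qed
    have IH: "A' \<in> cone_subgroup" using Suc.IH[OF A'0 A'1] .
    have S: "(\<lambda>j w. \<Sum>y\<in>UNIV. A N y * cone_cls y M j w) \<in> cone_subgroup"
      by (rule cs_sum) (simp_all add: cs_mult)
    have "A = (\<lambda>j w. A' j w + (\<Sum>y\<in>UNIV. A N y * cone_cls y M j w))"
    proof (intro ext)
      fix j w
      have "(\<Sum>y\<in>UNIV. A N y * cone_cls y M j w) = (\<Sum>y\<in>UNIV. if y = w then (if j = M \<or> j = N then A N w else 0) else 0)"
        by (rule sum.cong) (auto simp: cone_cls_def \<open>N = Suc M\<close>)
      also have "\<dots> = (if j = M \<or> j = N then A N w else 0)" by simp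
      finally show "A j w = A' j w + (\<Sum>y\<in>UNIV. A N y * cone_cls y M j w)" by (simp add: A'_def)
    qed
    then show ?thesis using cs_add[OF S IH] by simp
  qed
qed



definition conesum :: "('p \<times> nat) list \<Rightarrow> nat \<Rightarrow> 'p \<Rightarrow> int" where
  "conesum L j y = sum_list (map (\<lambda>(x,a). cone_cls x a j y) L)"

lemma cs_repr:
  assumes "A \<in> cone_subgroup"
  shows "\<exists>P N. A = (\<lambda>j y. conesum P j y - conesum N j y)"
  using assms
proof induction
  case zero
  show ?case by (rule exI[of _ "[]"], rule exI[of _ "[]"]) (simp add: conesum_def)
next
  case (add A x a)
  then obtain P N where "A = (\<lambda>j y. conesum P j y - conesum N j y)" by blast
  then show ?case
    by (intro exI[of _ "(x,a) # P"] exI[of _ N] ext) (simp add: conesum_def)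
next
  case (sub A x a)
  then obtain P N where "A = (\<lambda>j y. conesum P j y - conesum N j y)" by blast
  then show ?case
    by (intro exI[of _ P] exI[of _ "(x,a) # N"] ext) (simp add: conesum_def)
qed

fun addcones :: "('p, 'k::field) cplx \<Rightarrow> ('p \<times> nat) list \<Rightarrow> ('p, 'k) cplx" where
  "addcones E [] = E"
| "addcones E ((x,a) # L) = addcones (addcone E x a) L"

lemma cls_addcones: "cls (addcones E L) i y = cls E i y + conesum L i y"
  by (induction E L rule: addcones.induct) (auto simp: conesum_def cls_addcone)

lemma res_addcones:
  fixes E :: "('p::order, 'k::field) cplx"
  assumes "is_pmod M" "is_res_aug M E aug"
  shows "\<exists>aug'. is_res_aug M (addcones E L) aug'"
  using assms(2)
proof (induction E L arbitrary: aug rule: addcones.induct)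
  case (1 E) then show ?case by auto
next
  case (2 E x a L)
  show ?case using 2(1)[OF res_addcone[OF assms(1) 2(2)]] by simp
qed

lemma c_to_b:
  fixes PM PN :: "('p::order, 'k::field) cplx"
  assumes "is_pmod M" "is_pmod N" "is_proj_res M PM" "is_proj_res N PN"
    "(\<lambda>i x. cls PM i x - cls PN i x) \<in> cone_subgroup"
  shows "\<exists>E F. is_proj_res M E \<and> is_proj_res N F \<and> cls E = cls F"
proof -
  obtain P Q where PQ: "(\<lambda>i x. cls PM i x - cls PN i x) = (\<lambda>j y. conesum P j y - conesum Q j y)"
    using cs_repr[OF assms(5)] by blast
  obtain a1 a2 where a: "is_res_aug M PM a1" "is_res_aug N PN a2" using assms(3,4) unfolding is_proj_res_def by blast
  have "is_proj_res M (addcones PM Q)" using res_addcones[OF assms(1) a(1)] unfolding is_proj_res_def .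
  moreover have "is_proj_res N (addcones PN P)" using res_addcones[OF assms(2) a(2)] unfolding is_proj_res_def .
  moreover have "cls (addcones PM Q) = cls (addcones PN P)"
  proof (intro ext)
    fix i y
    have "cls PM i y - cls PN i y = conesum P i y - conesum Q i y" using fun_cong[OF fun_cong[OF PQ, of i], of y] by simp
    then show "cls (addcones PM Q) i y = cls (addcones PN P) i y" by (simp add: cls_addcones)
  qed
  ultimately show ?thesis by blast
qed

lemma cost0_iff:
  assumes "metric_on d"
  shows "cost d E F B = 0 \<longleftrightarrow> (\<forall>i. \<forall>j<nsmd E i. smd E i ! j = smd F i ! B i j)"
proof -
  have "cost d E F B = 0 \<longleftrightarrow> (\<forall>i. \<forall>j\<in>{..<nsmd E i}. ennreal (d (smd E i ! j) (smd F i ! B i j)) = 0)"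
    unfolding cost_def bot_ennreal[symmetric] SUP_bot_conv by simp
  also have "\<dots> \<longleftrightarrow> (\<forall>i. \<forall>j<nsmd E i. smd E i ! j = smd F i ! B i j)"
    using assms unfolding metric_on_def by (auto simp: ennreal_eq_zero_iff)
  finally show ?thesis .
qed

lemma metric_delta:
  fixes d :: "'p::finite \<Rightarrow> 'p \<Rightarrow> real"
  assumes "metric_on d"
  shows "\<exists>\<delta>>0. \<forall>x y. x \<noteq> y \<longrightarrow> \<delta> \<le> d x y"
proof -
  define S where "S = insert 1 ((\<lambda>(x,y). d x y) ` {(x,y). x \<noteq> y})"
  have fin: "finite S" unfolding S_def by simp
  have pos: "\<forall>s\<in>S. s > 0" using assms unfolding S_def metric_on_def
    by (auto simp: order.order_iff_strict)
  have "Min S > 0" using fin pos by (simp add: S_def)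
  moreover have "\<forall>x y. x \<noteq> y \<longrightarrow> Min S \<le> d x y"
    using fin by (auto simp: S_def intro!: Min_le)
  ultimately show ?thesis by blast
qed

lemma small_cost:
  assumes "metric_on d" "\<forall>x y. x \<noteq> y \<longrightarrow> \<delta> \<le> d x y" "cost d E F B < ennreal \<delta>"
  shows "cost d E F B = 0"
  unfolding cost0_iff[OF assms(1)]
proof (intro allI impI)
  fix i j assume j: "j < nsmd E i"
  have "ennreal (d (smd E i ! j) (smd F i ! B i j)) \<le> (SUP j\<in>{..<nsmd E i}. ennreal (d (smd E i ! j) (smd F i ! B i j)))"
    using j by (intro SUP_upper) simp
  also have "\<dots> \<le> cost d E F B"
    unfolding cost_def by (rule SUP_upper) simp
  also have "\<dots> < ennreal \<delta>" by fact
  finally have "d (smd E i ! j) (smd F i ! B i j) < \<delta>"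
    using assms(1) unfolding metric_on_def by (simp add: ennreal_less_iff)
  then show "smd E i ! j = smd F i ! B i j" using assms(2) by force
qed

lemma mset_bij:
  assumes "bij_betw b {..<length l1} {..<length l2}" "\<forall>j<length l1. l1 ! j = l2 ! b j"
  shows "mset l1 = mset l2"
proof -
  have "mset l1 = mset (map (nth l1) [0..<length l1])" by (simp add: map_nth)
  also have "\<dots> = image_mset (nth l1) (mset_set {..<length l1})" by (simp add: mset_set_upto_eq_mset_upto)
  also have "\<dots> = image_mset (nth l2 \<circ> b) (mset_set {..<length l1})"
    using assms(2) by (intro image_mset_cong) simp
  also have "\<dots> = image_mset (nth l2) (image_mset b (mset_set {..<length l1}))" by (simp add: image_mset.compositionality)
  also have "\<dots> = image_mset (nth l2) (mset_set {..<length l2})"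
    using assms(1) by (simp add: image_mset_mset_set bij_betw_def)
  also have "\<dots> = mset l2" by (metis map_nth mset_map mset_set_upto_eq_mset_upto)
  finally show ?thesis .
qed

lemma prem_cls:
  assumes "metric_on d" "prematching E F B" "cost d E F B = 0"
  shows "cls E = cls F"
proof -
  have "mset (smd E i) = mset (smd F i)" for i
  proof -
    have c: "\<forall>j<nsmd E i. smd E i ! j = smd F i ! B i j" using cost0_iff[OF assms(1), of E F B] assms(3) by blast
    show ?thesis using assms(2) c unfolding prematching_def nsmd_def
      by (intro mset_bij[of "B i"]) auto
  qed
  then show ?thesis unfolding cls_def by simp
qed

lemma cls_prem:
  assumes "metric_on d" "cls E = cls F"
  shows "(\<exists>B. prematching E F B \<and> cost d E F B = 0) \<and> (\<forall>i. nsmd E i = nsmd F i)"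
proof -
  have ms: "mset (smd E i) = mset (smd F i)" for i
  proof (rule multiset_eqI)
    fix x show "count (mset (smd E i)) x = count (mset (smd F i)) x"
      using fun_cong[OF fun_cong[OF assms(2), of i], of x] unfolding cls_def by simp
  qed
  have len: "nsmd E i = nsmd F i" for i using arg_cong[OF ms[of i], of size] unfolding nsmd_def by simp
  have "\<forall>i. \<exists>p. p permutes {..<length (smd F i)} \<and> permute_list p (smd F i) = smd E i"
    using mset_eq_permutation[OF ms] by metis
  then obtain B where B: "\<And>i. B i permutes {..<length (smd F i)}" "\<And>i. permute_list (B i) (smd F i) = smd E i"
    by metis
  have "prematching E F B" unfolding prematching_def
    using B(1) len by (simp add: nsmd_def permutes_imp_bij)
  moreover have "cost d E F B = 0" unfolding cost0_iff[OF assms(1)]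
    using B len by (metis nsmd_def permute_list_nth)
  ultimately show ?thesis using len by blast
qed

lemma d_to_c:
  fixes PM PN :: "('p::{finite,order}, 'k::field) cplx"
  assumes "is_cplx PM" "is_cplx PN" "alpha_hat (cls PM) = alpha_hat (cls PN)"
  shows "(\<lambda>i x. cls PM i x - cls PN i x) \<in> cone_subgroup"
proof -
  obtain N1 where N1: "\<forall>i\<ge>N1. smd PM i = []" using assms(1) unfolding is_cplx_def by blast
  obtain N2 where N2: "\<forall>i\<ge>N2. smd PN i = []" using assms(2) unfolding is_cplx_def by blast
  define N where "N = max N1 N2"
  have b1: "\<forall>i\<ge>N. cls PM i = (\<lambda>_. 0)" using cls_bnd[OF N1] N_def by simp
  have b2: "\<forall>i\<ge>N. cls PN i = (\<lambda>_. 0)" using cls_bnd[OF N2] N_def by simp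
  show ?thesis
  proof (rule cs_fs[where N=N])
    show "\<forall>i\<ge>N. (\<lambda>x. cls PM i x - cls PN i x) = (\<lambda>_. 0)" using b1 b2 by simp
    show "\<forall>x. (\<Sum>i<N. (-1)^i * (cls PM i x - cls PN i x)) = 0"
    proof
      fix x
      have a1: "alpha_hat (cls PM) x = (\<Sum>i<N. (-1)^i * cls PM i x)"
        using alpha_fs[OF b1, of x] b1 by simp
      have a2: "alpha_hat (cls PN) x = (\<Sum>i<N. (-1)^i * cls PN i x)"
        using alpha_fs[OF b2, of x] b2 by simp
      show "(\<Sum>i<N. (-1)^i * (cls PM i x - cls PN i x)) = 0"
        using a1 a2 assms(3) by (simp add: right_diff_distrib sum_subtractf)
    qed
  qed
qed

lemma distB'_le: "distB' d M N \<le> distB d M N"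
  unfolding distB'_def distB_def
proof (rule INF_mono)
  fix EF assume EF: "EF \<in> Res M N"
  have "distR' d (fst EF) (snd EF) \<le> distR d (fst EF) (snd EF)"
    unfolding distR'_def distR_def by (rule INF_superset_mono) (auto simp: matching_def)
  then show "\<exists>EF'\<in>Res M N. distR' d (fst EF') (snd EF') \<le> distR d (fst EF) (snd EF)"
    using EF by blast
qed

theorem lemma4p10:
  fixes d :: "'p::{finite, order} \<Rightarrow> 'p \<Rightarrow> real"
  assumes "metric_on d"
  shows
   "(\<forall>E F :: ('p, 'k::field) cplx. is_cplx E \<and> is_cplx F \<longrightarrow>
       (distR' d E F = 0 \<longleftrightarrow> (\<exists>B. prematching E F B \<and> cost d E F B = 0))
     \<and> ((\<exists>B. prematching E F B \<and> cost d E F B = 0) \<longleftrightarrow> cls E = cls F))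
  \<and> (\<forall>(M :: ('p, 'k) pmod) N PM PN.
       is_pmod M \<and> is_pmod N \<and> is_min_proj_res M PM \<and> is_min_proj_res N PN \<longrightarrow>
       (distB' d M N = 0 \<longleftrightarrow>
          (\<exists>E F B. is_proj_res M E \<and> is_proj_res N F \<and> (\<forall>i. nsmd E i = nsmd F i)
                   \<and> prematching E F B \<and> cost d E F B = 0))
     \<and> ((\<exists>E F B. is_proj_res M E \<and> is_proj_res N F \<and> (\<forall>i. nsmd E i = nsmd F i)
                   \<and> prematching E F B \<and> cost d E F B = 0) \<longleftrightarrow>
          (\<lambda>i x. cls PM i x - cls PN i x) \<in> cone_subgroup)
     \<and> ((\<lambda>i x. cls PM i x - cls PN i x) \<in> cone_subgroup \<longleftrightarrow>
          alpha_hat (cls PM) = alpha_hat (cls PN))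
     \<and> (distB d M N = 0 \<longrightarrow> alpha_hat (cls PM) = alpha_hat (cls PN)))"
proof -
  obtain \<delta> where dp: "\<delta> > 0" and dl: "\<forall>x y. x \<noteq> y \<longrightarrow> \<delta> \<le> d x y"
    using metric_delta[OF assms] by blast
  have dR: "distR' d E F = 0 \<longleftrightarrow> (\<exists>B. prematching E F B \<and> cost d E F B = 0)" for E F :: "('p, 'k) cplx"
  proof
    assume "distR' d E F = 0"
    then have "distR' d E F < ennreal \<delta>" using dp by simp
    then obtain B where "prematching E F B" "cost d E F B < ennreal \<delta>"
      unfolding distR'_def INF_less_iff by blast
    then show "\<exists>B. prematching E F B \<and> cost d E F B = 0" using small_cost[OF assms dl] by blast
  next
    assume "\<exists>B. prematching E F B \<and> cost d E F B = 0"
    then obtain B where "prematching E F B" "cost d E F B = 0" by blast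
    then have "distR' d E F \<le> cost d E F B" unfolding distR'_def by (intro INF_lower) simp
    then show "distR' d E F = 0" using \<open>cost d E F B = 0\<close> by simp
  qed
  have P1: "(\<exists>B. prematching E F B \<and> cost d E F B = 0) \<longleftrightarrow> cls E = cls F" for E F :: "('p, 'k) cplx"
  proof
    assume "\<exists>B. prematching E F B \<and> cost d E F B = 0"
    then obtain B where "prematching E F B" "cost d E F B = 0" by blast
    then show "cls E = cls F" by (rule prem_cls[OF assms])
  next
    assume "cls E = cls F"
    then show "\<exists>B. prematching E F B \<and> cost d E F B = 0" using cls_prem[OF assms] by blast
  qed
  have P2: "(distB' d M N = 0 \<longleftrightarrow>
          (\<exists>E F B. is_proj_res M E \<and> is_proj_res N F \<and> (\<forall>i. nsmd E i = nsmd F i)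
                   \<and> prematching E F B \<and> cost d E F B = 0))
     \<and> ((\<exists>E F B. is_proj_res M E \<and> is_proj_res N F \<and> (\<forall>i. nsmd E i = nsmd F i)
                   \<and> prematching E F B \<and> cost d E F B = 0) \<longleftrightarrow>
          (\<lambda>i x. cls PM i x - cls PN i x) \<in> cone_subgroup)
     \<and> ((\<lambda>i x. cls PM i x - cls PN i x) \<in> cone_subgroup \<longleftrightarrow>
          alpha_hat (cls PM) = alpha_hat (cls PN))
     \<and> (distB d M N = 0 \<longrightarrow> alpha_hat (cls PM) = alpha_hat (cls PN))"
    if h: "is_pmod M" "is_pmod N" "is_min_proj_res M PM" "is_min_proj_res N PN"
    for M N :: "('p, 'k) pmod" and PM PN :: "('p, 'k) cplx"
  proof -
    let ?b = "\<exists>E F B. is_proj_res M E \<and> is_proj_res N F \<and> (\<forall>i. nsmd E i = nsmd F i)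
                   \<and> prematching E F B \<and> cost d E F B = 0"
    let ?c = "(\<lambda>i x. cls PM i x - cls PN i x) \<in> cone_subgroup"
    let ?d = "alpha_hat (cls PM) = alpha_hat (cls PN)"
    have rM: "is_proj_res M PM" using h(3) unfolding is_min_proj_res_def is_proj_res_def by blast
    have rN: "is_proj_res N PN" using h(4) unfolding is_min_proj_res_def is_proj_res_def by blast
    have cM: "is_cplx PM" using rM unfolding is_proj_res_def is_res_aug_def by blast
    have cN: "is_cplx PN" using rN unfolding is_proj_res_def is_res_aug_def by blast
    have ab: "distB' d M N = 0 \<longleftrightarrow> ?b"
    proof
      assume "distB' d M N = 0"
      then have "distB' d M N < ennreal \<delta>" using dp by simp
      then obtain EF where EF: "EF \<in> Res M N" "distR' d (fst EF) (snd EF) < ennreal \<delta>"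
        unfolding distB'_def INF_less_iff by blast
      then obtain B where B: "prematching (fst EF) (snd EF) B" "cost d (fst EF) (snd EF) B < ennreal \<delta>"
        unfolding distR'_def INF_less_iff by blast
      have "cost d (fst EF) (snd EF) B = 0" using small_cost[OF assms dl B(2)] .
      then show ?b using EF(1) B(1) unfolding Res_def by (cases EF) auto
    next
      assume ?b
      then obtain E F B where EFB: "is_proj_res M E" "is_proj_res N F" "\<forall>i. nsmd E i = nsmd F i"
        "prematching E F B" "cost d E F B = 0" by blast
      have "(E, F) \<in> Res M N" using EFB unfolding Res_def by simp
      then have "distB' d M N \<le> distR' d (fst (E, F)) (snd (E, F))" unfolding distB'_def by (rule INF_lower)
      then have "distB' d M N \<le> distR' d E F" by simp
      also have "distR' d E F = 0" using dR EFB by blast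
      finally show "distB' d M N = 0" by simp
    qed
    have bd: "?b \<Longrightarrow> ?d"
    proof -
      assume ?b
      then obtain E F B where EFB: "is_proj_res M E" "is_proj_res N F"
        "prematching E F B" "cost d E F B = 0" by blast
      have "cls E = cls F" using prem_cls[OF assms EFB(3,4)] .
      moreover have "alpha_hat (cls PM) = alpha_hat (cls E)" using res_alpha_eq[OF rM EFB(1)] .
      moreover have "alpha_hat (cls PN) = alpha_hat (cls F)" using res_alpha_eq[OF rN EFB(2)] .
      ultimately show ?d by simp
    qed
    have dc: "?d \<Longrightarrow> ?c" using d_to_c[OF cM cN] .
    have cb: "?c \<Longrightarrow> ?b"
    proof -
      assume ?c
      then obtain E F where EF: "is_proj_res M E" "is_proj_res N F" "cls E = cls F"
        using c_to_b[OF h(1,2) rM rN] by blast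
      then show ?b using cls_prem[OF assms EF(3)] by blast
    qed
    have last: "distB d M N = 0 \<Longrightarrow> ?d"
    proof -
      assume "distB d M N = 0"
      then have "distB' d M N = 0" using distB'_le[of d M N] by simp
      then show ?d using ab bd by blast
    qed
    have bc: "?b \<longleftrightarrow> ?c" using bd dc cb by blast
    have cd: "?c \<longleftrightarrow> ?d" using bd dc cb by blast
    show ?thesis by (intro conjI ab bc cd impI last)
  qed
  have A: "\<forall>E F :: ('p, 'k::field) cplx. is_cplx E \<and> is_cplx F \<longrightarrow>
       (distR' d E F = 0 \<longleftrightarrow> (\<exists>B. prematching E F B \<and> cost d E F B = 0))
     \<and> ((\<exists>B. prematching E F B \<and> cost d E F B = 0) \<longleftrightarrow> cls E = cls F)"
    by (intro allI impI conjI dR P1)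
  show ?thesis
  proof (rule conjI[OF A], intro allI impI)
    fix M N :: "('p, 'k) pmod" and PM PN :: "('p, 'k) cplx"
    assume hh: "is_pmod M \<and> is_pmod N \<and> is_min_proj_res M PM \<and> is_min_proj_res N PN"
    show "(distB' d M N = 0 \<longleftrightarrow>
          (\<exists>E F B. is_proj_res M E \<and> is_proj_res N F \<and> (\<forall>i. nsmd E i = nsmd F i)
                   \<and> prematching E F B \<and> cost d E F B = 0))
     \<and> ((\<exists>E F B. is_proj_res M E \<and> is_proj_res N F \<and> (\<forall>i. nsmd E i = nsmd F i)
                   \<and> prematching E F B \<and> cost d E F B = 0) \<longleftrightarrow>
          (\<lambda>i x. cls PM i x - cls PN i x) \<in> cone_subgroup)
     \<and> ((\<lambda>i x. cls PM i x - cls PN i x) \<in> cone_subgroup \<longleftrightarrow>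
          alpha_hat (cls PM) = alpha_hat (cls PN))
     \<and> (distB d M N = 0 \<longrightarrow> alpha_hat (cls PM) = alpha_hat (cls PN))"
      by (rule P2[OF hh[THEN conjunct1] hh[THEN conjunct2, THEN conjunct1] hh[THEN conjunct2, THEN conjunct2, THEN conjunct1] hh[THEN conjunct2, THEN conjunct2, THEN conjunct2]])
  qed
qed


end
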